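(* Let $(V,h)$ be a real quadratic space of odd dimension $d$ and let $\gamma^+,\gamma^-:\mathrm{Cl}(V,h)\to\mathrm{End}_\mathbb{C}(S)$ be the Pauli representations. Then $\gamma^+$ and $\gamma^-$ are weakly-faithful, and they are isomorphic in the category $\mathrm{\mathbb{C}lRep}_w$.
   Context: $(V,h)$: finite-dimensional real vector space with non-degenerate symmetric bilinear form of signature $(p,q)$, $d=p+q$; $\mathrm{Cl}(V,h)$ its real Clifford algebra and $\mathbb{C}\mathrm{l}(V,h)=\mathrm{Cl}(V,h)\otimes_\mathbb{R}\mathbb{C}$. For $d$ odd, fix an orientation of $V$ and let $\nu\in\mathrm{Cl}(V,h)$ be the corresponding Clifford volume element; it is central with $\nu^2=\sigma_{p,q}=(-1)^{(p-q-1)/2}$. Let $\nu_\mathbb{C}=\lambda\nu$ with $\lambda^2=\sigma_{p,q}$, so $\nu_\mathbb{C}$ is central in $\mathbb{C}\mathrm{l}(V,h)$ and $\nu_\mathbb{C}^2=1$. The Pauli representations are the two irreducible complex-algebra representations $\gamma^\pm_\mathbb{C}:\mathbb{C}\mathrm{l}(V,h)\to\mathrm{End}_\mathbb{C}(S)$ (with $\dim_\mathbb{C}S=2^{(d-1)/2}$) characterized by $\gamma^\pm_\mathbb{C}(\nu_\mathbb{C})=\pm\mathrm{id}_S$, restricted to $\mathrm{Cl}(V,h)$: $\gamma^\pm=\gamma^\pm_\mathbb{C}|_{\mathrm{Cl}(V,h)}$. A complex Clifford representation (unital real-algebra morphism $\mathrm{Cl}(V,h)\to\mathrm{End}_\mathbb{C}(S)$)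 is weakly-faithful if its restriction to $V$ is injective. $\mathrm{\mathbb{C}lRep}_w$ is the category whose objects are weakly-faithful complex Clifford representations (of arbitrary quadratic spaces) and whose morphisms $\gamma\to\gamma'$ are pairs $(\varphi_0,\varphi)$ of an isometry $\varphi_0:(V,h)\to(V',h')$ and a $\mathbb{C}$-linear map $\varphi:S\to S'$ with $\gamma'(\mathrm{Cl}(\varphi_0)(x))\circ\varphi=\varphi\circ\gamma(x)$ for all $x\in\mathrm{Cl}(V,h)$, where $\mathrm{Cl}(\varphi_0)$ is the algebra morphism extending $\varphi_0$. *)

theory Defs
  imports "HOL-Analysis.Analysis"
begin

text \<open>The quadratic space (V,h): V is a finite-dimensional real vector space (a type of
class euclidean_space; its inner product is NOT used), h a symmetric bilinear form.\<close>

definition quadratic_space :: "('v::euclidean_space \<Rightarrow> 'v \<Rightarrow> real) \<Rightarrow> bool" where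
  "quadratic_space h \<longleftrightarrow> bilinear h \<and> (\<forall>x y. h x y = h y x) \<and>
     (\<forall>x. (\<forall>y. h x y = 0) \<longrightarrow> x = 0)"

text \<open>An ordered h-orthonormal basis; it fixes the orientation of V.\<close>

definition orthonormal_basis :: "('v::euclidean_space \<Rightarrow> 'v \<Rightarrow> real) \<Rightarrow> 'v list \<Rightarrow> bool" where
  "orthonormal_basis h es \<longleftrightarrow> length es = DIM('v) \<and>
     (\<forall>i<length es. \<forall>j<length es. i \<noteq> j \<longrightarrow> h (es ! i) (es ! j) = 0) \<and>
     (\<forall>i<length es. h (es ! i) (es ! i) = 1 \<or> h (es ! i) (es ! i) = -1)"

definition sig_p :: "('v \<Rightarrow> 'v \<Rightarrow> real) \<Rightarrow> 'v list \<Rightarrow> nat" where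
  "sig_p h es = card {i. i < length es \<and> h (es ! i) (es ! i) = 1}"

definition sig_q :: "('v \<Rightarrow> 'v \<Rightarrow> real) \<Rightarrow> 'v list \<Rightarrow> nat" where
  "sig_q h es = card {i. i < length es \<and> h (es ! i) (es ! i) = -1}"

definition sigma_pq :: "('v \<Rightarrow> 'v \<Rightarrow> real) \<Rightarrow> 'v list \<Rightarrow> real" where
  "sigma_pq h es = (-1) powi ((int (sig_p h es) - int (sig_q h es) - 1) div 2)"

text \<open>A unital real-algebra morphism
Cl(V,h) -> End_C(S) is (by the universal property of the Clifford algebra) the same as
its restriction to V: a real-linear map gamma with gamma(v)^2 = h(v,v) id.
We represent Clifford representations by this restriction.\<close>

definition clifford_rep :: "('v::euclidean_space \<Rightarrow> 'v \<Rightarrow> real) \<Rightarrow> ('v \<Rightarrow> complex^'n^'n) \<Rightarrow> bool" where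
  "clifford_rep h \<gamma> \<longleftrightarrow> linear \<gamma> \<and> (\<forall>v. \<gamma> v ** \<gamma> v = mat (complex_of_real (h v v)))"

definition weakly_faithful :: "('v::euclidean_space \<Rightarrow> complex^'n^'n) \<Rightarrow> bool" where
  "weakly_faithful \<gamma> \<longleftrightarrow> inj \<gamma>"

definition vol_image :: "('v \<Rightarrow> complex^'n^'n) \<Rightarrow> 'v list \<Rightarrow> complex^'n^'n" where
  "vol_image \<gamma> es = foldr (\<lambda>e M. \<gamma> e ** M) es (mat 1)"

text \<open>Complex subspaces of S invariant under the representation (the complexified
representation is generated over C by gamma(V)); irreducibility.\<close>

definition invariant_csubspace :: "('v \<Rightarrow> complex^'n^'n) \<Rightarrow> (complex^'n) set \<Rightarrow> bool" where
  "invariant_csubspace \<gamma> W \<longleftrightarrow> 0 \<in> W \<and> (\<forall>x\<in>W. \<forall>y\<in>W. x + y \<in> W) \<and>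
     (\<forall>c. \<forall>x\<in>W. c *s x \<in> W) \<and> (\<forall>v. \<forall>x\<in>W. \<gamma> v *v x \<in> W)"

definition irreducible_rep :: "('v \<Rightarrow> complex^'n^'n) \<Rightarrow> bool" where
  "irreducible_rep \<gamma> \<longleftrightarrow> (\<forall>W. invariant_csubspace \<gamma> W \<longrightarrow> W = {0} \<or> W = UNIV)"

text \<open>Pauli representation with sign s (s = 1 for gamma^+, s = -1 for gamma^-), with
nu_C = lam * nu, lam^2 = sigma_{p,q}: irreducible, dim S = 2^((d-1)/2), and
gamma_C(nu_C) = s id.\<close>

definition pauli_rep :: "('v::euclidean_space \<Rightarrow> 'v \<Rightarrow> real) \<Rightarrow> 'v list \<Rightarrow> complex \<Rightarrow> complex
     \<Rightarrow> ('v \<Rightarrow> complex^'n^'n) \<Rightarrow> bool" where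
  "pauli_rep h es lam s \<gamma> \<longleftrightarrow> clifford_rep h \<gamma> \<and> irreducible_rep \<gamma> \<and>
     CARD('n) = 2 ^ ((DIM('v) - 1) div 2) \<and>
     mat lam ** vol_image \<gamma> es = mat s"

definition isometry :: "('v::euclidean_space \<Rightarrow> 'v \<Rightarrow> real) \<Rightarrow> ('w::euclidean_space \<Rightarrow> 'w \<Rightarrow> real)
     \<Rightarrow> ('v \<Rightarrow> 'w) \<Rightarrow> bool" where
  "isometry h h' f \<longleftrightarrow> linear f \<and> (\<forall>x y. h' (f x) (f y) = h x y)"

text \<open>Morphisms (phi0, phi): the intertwining condition on all of Cl(V,h) is equivalent to
the condition on the generators V, since Cl(phi0) is the algebra morphism extending phi0.\<close>

definition clrep_mor :: "('v::euclidean_space \<Rightarrow> 'v \<Rightarrow> real) \<Rightarrow> ('v \<Rightarrow> complex^'n^'n)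
     \<Rightarrow> ('w::euclidean_space \<Rightarrow> 'w \<Rightarrow> real) \<Rightarrow> ('w \<Rightarrow> complex^'m^'m)
     \<Rightarrow> ('v \<Rightarrow> 'w) \<Rightarrow> complex^'n^'m \<Rightarrow> bool" where
  "clrep_mor h \<gamma> h' \<gamma>' f0 f \<longleftrightarrow>
     quadratic_space h \<and> quadratic_space h' \<and>
     clifford_rep h \<gamma> \<and> weakly_faithful \<gamma> \<and> clifford_rep h' \<gamma>' \<and> weakly_faithful \<gamma>' \<and>
     isometry h h' f0 \<and> (\<forall>v. \<gamma>' (f0 v) ** f = f ** \<gamma> v)"

definition clrep_iso :: "('v::euclidean_space \<Rightarrow> 'v \<Rightarrow> real) \<Rightarrow> ('v \<Rightarrow> complex^'n^'n)
     \<Rightarrow> ('w::euclidean_space \<Rightarrow> 'w \<Rightarrow> real) \<Rightarrow> ('w \<Rightarrow> complex^'m^'m) \<Rightarrow> bool" where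
  "clrep_iso h \<gamma> h' \<gamma>' \<longleftrightarrow> (\<exists>f0 f g0 g.
     clrep_mor h \<gamma> h' \<gamma>' f0 f \<and> clrep_mor h' \<gamma>' h \<gamma> g0 g \<and>
     g0 \<circ> f0 = id \<and> f0 \<circ> g0 = id \<and> g ** f = mat 1 \<and> f ** g = mat 1)"

end

theory Submission
  imports Defs
begin

lemma mm_add_r: "((A::complex^'n::finite^'n) + B) ** C = A ** C + B ** C"
  by (simp add: matrix_matrix_mult_def vec_eq_iff sum.distrib algebra_simps)
lemma mm_add_l: "(A::complex^'n::finite^'n) ** (B + C) = A ** B + A ** C"
  by (rule matrix_add_ldistrib)
lemma mm_diff_r: "((A::complex^'n::finite^'n) - B) ** C = A ** C - B ** C"
  by (simp add: matrix_matrix_mult_def vec_eq_iff sum_subtractf algebra_simps)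
lemma mm_diff_l: "(A::complex^'n::finite^'n) ** (B - C) = A ** B - A ** C"
  by (simp add: matrix_matrix_mult_def vec_eq_iff sum_subtractf algebra_simps)
lemma mm_neg_r: "(- (A::complex^'n::finite^'n)) ** C = - (A ** C)"
  by (simp add: matrix_matrix_mult_def vec_eq_iff sum_negf)
lemma mm_neg_l: "(A::complex^'n::finite^'n) ** (- C) = - (A ** C)"
  by (simp add: matrix_matrix_mult_def vec_eq_iff sum_negf)
lemma mm_scaleR_r: "(r *\<^sub>R (A::complex^'n::finite^'n)) ** C = r *\<^sub>R (A ** C)"
  by (simp add: scalar_matrix_assoc)
lemma mm_scaleR_l: "(A::complex^'n::finite^'n) ** (r *\<^sub>R C) = r *\<^sub>R (A ** C)"
  by (simp add: matrix_scalar_ac scalar_matrix_assoc)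
lemma mat_of_real: "mat (complex_of_real r) = r *\<^sub>R (mat 1 :: complex^'n::finite^'n)"
  by (simp add: mat_def vec_eq_iff of_real_def)
lemma mat_comm: "mat c ** (A::complex^'n::finite^'n) = A ** mat c"
  by (simp add: matrix_matrix_mult_def mat_def vec_eq_iff if_distrib if_distribR cong: if_cong)
lemma mat_neg1: "mat (-1) ** (A::complex^'n::finite^'n) = - A"
  by (simp add: matrix_matrix_mult_def mat_def vec_eq_iff if_distrib if_distribR cong: if_cong)
lemma lassoc: "(P::complex^'n::finite^'n) ** Q = R \<Longrightarrow> M ** P ** Q = M ** R"
  by (simp add: matrix_mul_assoc[symmetric])

lemmas mm_simps = mm_add_r mm_add_l mm_diff_r mm_diff_l mm_neg_r mm_neg_l mm_scaleR_r mm_scaleR_l matrix_mul_assoc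

lemma scal_mat_eq0: "r *\<^sub>R (mat 1 :: complex^'n::finite^'n) = 0 \<Longrightarrow> r = 0"
proof -
  assume a: "r *\<^sub>R (mat 1 :: complex^'n::finite^'n) = 0"
  have "(r *\<^sub>R (mat 1 :: complex^'n::finite^'n)) $ undefined $ undefined = complex_of_real r"
    by (simp add: mat_def of_real_def)
  then show ?thesis using a by simp
qed

lemma mat1_ne0: "(mat 1 :: complex^'n::finite^'n) \<noteq> 0"
proof
  assume "(mat 1 :: complex^'n::finite^'n) = 0"
  then have "(mat 1 :: complex^'n::finite^'n) $ undefined $ undefined = 0" by simp
  then show False by (simp add: mat_def)
qed

lemma case1:
  fixes Ai Ak X Bi Bk :: "complex^'n::finite^'n"
  assumes a1: "Ai ** Ak = -(Ak ** Ai)" and a2: "Bi ** Bk = -(Bk ** Bi)" and a3: "Ai ** X = -(X ** Bi)"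
  shows "Ai ** (X - e *\<^sub>R (Ak ** X ** Bk)) = -((X - e *\<^sub>R (Ak ** X ** Bk)) ** Bi)"
  by (simp add: mm_simps a1 a2 a3 lassoc[OF a1] lassoc[OF a2] lassoc[OF a3])

lemma case1k:
  fixes Ak X Bk :: "complex^'n::finite^'n"
  assumes a1: "Ak ** Ak = e *\<^sub>R mat 1" and a2: "Bk ** Bk = e *\<^sub>R mat 1" and e: "e * e = 1"
  shows "Ak ** (X - e *\<^sub>R (Ak ** X ** Bk)) = -((X - e *\<^sub>R (Ak ** X ** Bk)) ** Bk)"
  by (simp add: mm_simps a1 a2 lassoc[OF a1] lassoc[OF a2] e)

lemma case2i:
  fixes Ai Ak Al X Bi :: "complex^'n::finite^'n"
  assumes a1: "Ai ** Ak = -(Ak ** Ai)" and a2: "Ai ** Al = -(Al ** Ai)" and a3: "Ai ** X = -(X ** Bi)"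
  shows "Ai ** (Ak ** Al ** X) = -((Ak ** Al ** X) ** Bi)"
  by (simp add: mm_simps a1 a2 a3 lassoc[OF a1] lassoc[OF a2] lassoc[OF a3])

lemma case2k:
  fixes Ak Al X Bk :: "complex^'n::finite^'n"
  assumes a1: "Ak ** Al = -(Al ** Ak)" and a2: "Ak ** Ak = e *\<^sub>R mat 1" and a3: "X ** Bk = Ak ** X"
  shows "Ak ** (Ak ** Al ** X) = -((Ak ** Al ** X) ** Bk)"
  by (simp add: mm_simps a1 a2 a3 lassoc[OF a1] lassoc[OF a2] lassoc[OF a3])


lemma anticomm:
  fixes \<gamma> :: "'v::euclidean_space \<Rightarrow> complex^'n::finite^'n"
  assumes cr: "clifford_rep h \<gamma>" and qs: "quadratic_space h"
  shows "\<gamma> u ** \<gamma> v + \<gamma> v ** \<gamma> u = (2 * h u v) *\<^sub>R mat 1"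
proof -
  have lin: "linear \<gamma>" and sq: "\<And>w. \<gamma> w ** \<gamma> w = h w w *\<^sub>R mat 1"
    using cr by (auto simp: clifford_rep_def mat_of_real)
  have bl: "bilinear h" and sy: "\<And>x y. h x y = h y x" using qs by (auto simp: quadratic_space_def)
  have "\<gamma> (u+v) ** \<gamma> (u+v) = h (u+v) (u+v) *\<^sub>R mat 1" by (rule sq)
  moreover have "\<gamma> (u+v) = \<gamma> u + \<gamma> v" using lin by (simp add: linear_add)
  moreover have "h (u+v) (u+v) = h u u + 2 * h u v + h v v"
    using bl sy[of v u] by (simp add: bilinear_ladd bilinear_radd)
  ultimately have "\<gamma> u ** \<gamma> u + \<gamma> u ** \<gamma> v + (\<gamma> v ** \<gamma> u + \<gamma> v ** \<gamma> v)
      = (h u u + 2 * h u v + h v v) *\<^sub>R mat 1"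
    by (simp add: mm_add_r mm_add_l ac_simps)
  then show ?thesis using sq[of u] sq[of v] by (simp add: scaleR_add_left algebra_simps)
qed

lemma anticomm0:
  fixes \<gamma> :: "'v::euclidean_space \<Rightarrow> complex^'n::finite^'n"
  assumes cr: "clifford_rep h \<gamma>" and qs: "quadratic_space h" and "h u v = 0"
  shows "\<gamma> u ** \<gamma> v = - (\<gamma> v ** \<gamma> u)"
  using anticomm[OF cr qs, of u v] assms(3) by (simp add: eq_neg_iff_add_eq_0)

lemma wf:
  fixes \<gamma> :: "'v::euclidean_space \<Rightarrow> complex^'n::finite^'n"
  assumes cr: "clifford_rep h \<gamma>" and qs: "quadratic_space h"
  shows "weakly_faithful \<gamma>"
proof -
  have lin: "linear \<gamma>" using cr by (simp add: clifford_rep_def)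
  have "\<forall>x. \<gamma> x = 0 \<longrightarrow> x = 0"
  proof (intro allI impI)
    fix x assume x0: "\<gamma> x = 0"
    have "\<forall>y. h x y = 0"
    proof
      fix y
      have "(2 * h x y) *\<^sub>R (mat 1 :: complex^'n^'n) = 0"
        using anticomm[OF cr qs, of x y] x0 by simp
      then show "h x y = 0" using scal_mat_eq0 by fastforce
    qed
    then show "x = 0" using qs by (simp add: quadratic_space_def)
  qed
  then show ?thesis unfolding weakly_faithful_def using linear_injective_0[OF lin] by simp
qed

lemma es_span:
  fixes h :: "'v::euclidean_space \<Rightarrow> 'v \<Rightarrow> real"
  assumes qs: "quadratic_space h" and ob: "orthonormal_basis h es"
  shows "span (set es) = UNIV"
proof -
  have bl: "bilinear h" using qs by (simp add: quadratic_space_def)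
  have len: "length es = DIM('v)"
    and orth: "\<And>i j. i < length es \<Longrightarrow> j < length es \<Longrightarrow> i \<noteq> j \<Longrightarrow> h (es!i) (es!j) = 0"
    and nrm: "\<And>i. i < length es \<Longrightarrow> h (es!i) (es!i) = 1 \<or> h (es!i) (es!i) = -1"
    using ob by (auto simp: orthonormal_basis_def)
  have dist: "distinct es"
    unfolding distinct_conv_nth
  proof (intro allI impI)
    fix i j assume "i < length es" "j < length es" "i \<noteq> j"
    then show "es!i \<noteq> es!j" using orth[of i j] nrm[of i] by auto
  qed
  have orth2: "h w v = 0" if "v \<in> set es" "w \<in> set es" "w \<noteq> v" for v w
    using that orth by (metis in_set_conv_nth)
  have nz: "h v v \<noteq> 0" if "v \<in> set es" for v
    using that nrm by (metis in_set_conv_nth zero_neq_neg_one zero_neq_one)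
  have ind: "independent (set es)"
  proof
    assume "dependent (set es)"
    then obtain u where u: "\<exists>v\<in>set es. u v \<noteq> 0" "(\<Sum>v\<in>set es. u v *\<^sub>R v) = 0"
      using dependent_finite[of "set es"] by auto
    then obtain v where v: "v \<in> set es" "u v \<noteq> 0" by auto
    have lin: "linear (\<lambda>x. h x v)" using bl by (simp add: bilinear_def)
    have "0 = h (\<Sum>w\<in>set es. u w *\<^sub>R w) v" using u(2) bilinear_lzero[OF bl] by simp
    also have "\<dots> = (\<Sum>w\<in>set es. u w * h w v)"
      by (simp add: linear_sum[OF lin] linear_scale[OF lin])
    also have "\<dots> = u v * h v v + (\<Sum>w\<in>set es - {v}. u w * h w v)"
      by (rule sum.remove) (use v in auto)
    also have "(\<Sum>w\<in>set es - {v}. u w * h w v) = 0"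
      by (rule sum.neutral) (use orth2 v in auto)
    finally show False using v nz[OF v(1)] by simp
  qed
  have "UNIV \<subseteq> span (set es)"
    by (rule card_ge_dim_independent) (use ind len distinct_card[OF dist] in auto)
  then show ?thesis by auto
qed


lemma foldr_split:
  "foldr (\<lambda>e M. (\<gamma> e :: complex^'n::finite^'n) ** M) L N = foldr (\<lambda>e M. \<gamma> e ** M) L (mat 1) ** N"
  by (induction L) (simp_all add: matrix_mul_assoc)

lemma prod_ok:
  fixes \<Gamma> \<Delta> :: "'v \<Rightarrow> complex^'n::finite^'n"
  assumes "\<forall>e\<in>set L. \<Gamma> e ** X = -(X ** \<Delta> e)"
  shows "foldr (\<lambda>e M. \<Gamma> e ** M) L (mat 1) ** X
    = ((-1::real) ^ length L) *\<^sub>R (X ** foldr (\<lambda>e M. \<Delta> e ** M) L (mat 1))"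
  using assms
proof (induction L)
  case Nil
  show ?case by simp
next
  case (Cons a L)
  let ?P = "foldr (\<lambda>e M. \<Gamma> e ** M) L (mat 1)"
  let ?Q = "foldr (\<lambda>e M. \<Delta> e ** M) L (mat 1)"
  have ha: "\<Gamma> a ** X = -(X ** \<Delta> a)" using Cons.prems by simp
  have "foldr (\<lambda>e M. \<Gamma> e ** M) (a#L) (mat 1) ** X = \<Gamma> a ** (?P ** X)"
    by (simp add: matrix_mul_assoc)
  also have "\<dots> = ((-1::real) ^ length L) *\<^sub>R (\<Gamma> a ** X ** ?Q)"
    using Cons by (simp add: mm_simps)
  also have "\<dots> = ((-1::real) ^ length (a#L)) *\<^sub>R (X ** foldr (\<lambda>e M. \<Delta> e ** M) (a#L) (mat 1))"
    by (simp add: ha mm_simps)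
  finally show ?case .
qed

theorem proposition4p3:
  fixes h :: "'v::euclidean_space \<Rightarrow> 'v \<Rightarrow> real"
    and es :: "'v list" and lam :: complex
    and gp gm :: "'v \<Rightarrow> complex^'n^'n"
  assumes "quadratic_space h"
    and "odd DIM('v)"
    and "orthonormal_basis h es"
    and "lam ^ 2 = complex_of_real (sigma_pq h es)"
    and "pauli_rep h es lam 1 gp"
    and "pauli_rep h es lam (-1) gm"
  shows "weakly_faithful gp \<and> weakly_faithful gm \<and> clrep_iso h gp h gm"
proof -
  note qs = assms(1)
  have crp: "clifford_rep h gp" and irp: "irreducible_rep gp"
    and volp: "mat lam ** vol_image gp es = mat 1"
    using assms(5) by (auto simp: pauli_rep_def)
  have crm: "clifford_rep h gm" and volm: "mat lam ** vol_image gm es = mat (-1)"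
    using assms(6) by (auto simp: pauli_rep_def)
  have wfp: "weakly_faithful gp" by (rule wf[OF crp qs])
  have wfm: "weakly_faithful gm" by (rule wf[OF crm qs])
  have linp: "linear gp" using crp by (simp add: clifford_rep_def)
  have linm: "linear gm" using crm by (simp add: clifford_rep_def)
  have bl: "bilinear h" using qs by (simp add: quadratic_space_def)
  define d where "d = length es"
  have dd: "d = DIM('v)" using assms(3) by (simp add: orthonormal_basis_def d_def)
  have dodd: "odd d" using assms(2) dd by simp
  have d0: "d > 0" using dodd by (simp add: odd_pos)
  have orth: "\<And>i j. i < d \<Longrightarrow> j < d \<Longrightarrow> i \<noteq> j \<Longrightarrow> h (es!i) (es!j) = 0"
    and nrm: "\<And>i. i < d \<Longrightarrow> h (es!i) (es!i) = 1 \<or> h (es!i) (es!i) = -1"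
    using assms(3) by (auto simp: orthonormal_basis_def d_def)
  define A where "A i = gm (es!i)" for i
  define B where "B i = gp (es!i)" for i
  define \<epsilon> where "\<epsilon> i = h (es!i) (es!i)" for i
  have AA: "\<And>i. A i ** A i = \<epsilon> i *\<^sub>R mat 1"
    using crm by (simp add: A_def \<epsilon>_def clifford_rep_def mat_of_real)
  have BB: "\<And>i. B i ** B i = \<epsilon> i *\<^sub>R mat 1"
    using crp by (simp add: B_def \<epsilon>_def clifford_rep_def mat_of_real)
  have ee: "\<epsilon> i * \<epsilon> i = 1" if "i < d" for i
    using nrm[OF that] unfolding \<epsilon>_def by auto
  have Aanti: "A i ** A j = -(A j ** A i)" if "i < d" "j < d" "i \<noteq> j" for i j
    unfolding A_def by (rule anticomm0[OF crm qs orth[OF that]])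
  have Banti: "B i ** B j = -(B j ** B i)" if "i < d" "j < d" "i \<noteq> j" for i j
    unfolding B_def by (rule anticomm0[OF crp qs orth[OF that]])
  have greedy: "k \<le> d - 1 \<Longrightarrow> \<exists>X. X \<noteq> 0 \<and> (\<forall>i<k. A i ** X = -(X ** B i))" for k
  proof (induction k)
    case 0
    then show ?case using mat1_ne0 by blast
  next
    case (Suc k)
    then obtain X where X0: "X \<noteq> 0" and Xk: "\<forall>i<k. A i ** X = -(X ** B i)" by auto
    define l where "l = d - 1"
    have kl: "k < l" "l < d" "k < d" using Suc.prems d0 unfolding l_def by auto
    define Y where "Y = X - \<epsilon> k *\<^sub>R (A k ** X ** B k)"
    show ?case
    proof (cases "Y = 0")
      case False
      have "\<forall>i<Suc k. A i ** Y = -(Y ** B i)"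
      proof (intro allI impI)
        fix i assume i: "i < Suc k"
        show "A i ** Y = -(Y ** B i)"
        proof (cases "i = k")
          case True
          show ?thesis unfolding Y_def True by (rule case1k[OF AA BB ee[OF kl(3)]])
        next
          case False
          then have ik: "i < k" using i by simp
          have a1: "A i ** A k = -(A k ** A i)" by (rule Aanti) (use ik kl in auto)
          have a2: "B i ** B k = -(B k ** B i)" by (rule Banti) (use ik kl in auto)
          have a3: "A i ** X = -(X ** B i)" using Xk ik by blast
          show ?thesis unfolding Y_def by (rule case1[OF a1 a2 a3])
        qed
      qed
      then show ?thesis using False by blast
    next
      case True
      have XB: "X ** B k = A k ** X"
      proof -
        from True have "X = \<epsilon> k *\<^sub>R (A k ** X ** B k)" by (simp add: Y_def)
        then have "X ** B k = \<epsilon> k *\<^sub>R (A k ** X ** B k ** B k)" by (metis mm_scaleR_r)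
        also have "\<dots> = (\<epsilon> k * \<epsilon> k) *\<^sub>R (A k ** X)"
          by (simp add: lassoc[OF BB[of k]] mm_simps)
        also have "\<dots> = A k ** X" using ee[OF kl(3)] by simp
        finally show ?thesis .
      qed
      define Z where "Z = A k ** A l ** X"
      have Zok: "\<forall>i<Suc k. A i ** Z = -(Z ** B i)"
      proof (intro allI impI)
        fix i assume i: "i < Suc k"
        show "A i ** Z = -(Z ** B i)"
        proof (cases "i = k")
          case True
          have kl': "A k ** A l = -(A l ** A k)" by (rule Aanti) (use kl in auto)
          show ?thesis unfolding Z_def True by (rule case2k[OF kl' AA XB])
        next
          case False
          then have ik: "i < k" using i by simp
          have a1: "A i ** A k = -(A k ** A i)" by (rule Aanti) (use ik kl in auto)
          have a2: "A i ** A l = -(A l ** A i)" by (rule Aanti) (use ik kl in auto)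
          have a3: "A i ** X = -(X ** B i)" using Xk ik by blast
          show ?thesis unfolding Z_def by (rule case2i[OF a1 a2 a3])
        qed
      qed
      have "Z \<noteq> 0"
      proof
        assume "Z = 0"
        then have "A l ** A k ** Z = 0" by simp
        moreover have "A l ** A k ** Z = (\<epsilon> k * \<epsilon> l) *\<^sub>R X"
          unfolding Z_def by (simp add: mm_simps lassoc[OF AA[of k]] AA)
        moreover have "\<epsilon> k * \<epsilon> l \<noteq> 0" using ee[of k] ee[of l] kl by auto
        ultimately show False using X0 by simp
      qed
      then show ?thesis using Zok by blast
    qed
  qed
  obtain X where X0: "X \<noteq> 0" and Xl: "\<forall>i<d-1. A i ** X = -(X ** B i)"
    using greedy by blast
  define L where "L = butlast es"
  define e where "e = last es"
  have esne: "es \<noteq> []" using d0 by (auto simp: d_def)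
  have esL: "es = L @ [e]" using esne by (simp add: L_def e_def)
  have eidx: "e = es ! (d-1)" using esne by (simp add: e_def d_def last_conv_nth)
  have lenL: "length L = d - 1" by (simp add: L_def d_def)
  have evL: "even (length L)" using lenL dodd d0 by simp
  have Lok: "\<forall>x\<in>set L. gm x ** X = -(X ** gp x)"
  proof
    fix x assume "x \<in> set L"
    then obtain i where i: "i < length L" "x = L ! i" by (metis in_set_conv_nth)
    then have "x = es ! i" by (simp add: L_def nth_butlast)
    then show "gm x ** X = -(X ** gp x)" using Xl i lenL by (simp add: A_def B_def)
  qed
  define PA where "PA = foldr (\<lambda>e M. gm e ** M) L (mat 1)"
  define PB where "PB = foldr (\<lambda>e M. gp e ** M) L (mat 1)"
  have PX: "PA ** X = X ** PB"
    using prod_ok[OF Lok] evL by (simp add: PA_def PB_def)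
  have volA: "vol_image gm es = PA ** gm e"
    by (subst esL) (simp add: vol_image_def PA_def foldr_split[of gm L "gm e"])
  have volB: "vol_image gp es = PB ** gp e"
    by (subst esL) (simp add: vol_image_def PB_def foldr_split[of gp L "gp e"])
  define \<epsilon>' where "\<epsilon>' = h e e"
  have eA: "gm e ** gm e = \<epsilon>' *\<^sub>R mat 1" using AA[of "d-1"] eidx by (simp add: A_def \<epsilon>_def \<epsilon>'_def)
  have eB: "gp e ** gp e = \<epsilon>' *\<^sub>R mat 1" using BB[of "d-1"] eidx by (simp add: B_def \<epsilon>_def \<epsilon>'_def)
  have H1: "\<epsilon>' *\<^sub>R (mat lam ** PA) = - gm e"
  proof -
    have "mat lam ** PA ** gm e = mat (-1)" using volm volA by (simp add: matrix_mul_assoc)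
    then have "mat lam ** PA ** gm e ** gm e = mat (-1) ** gm e" by simp
    then show ?thesis by (simp add: lassoc[OF eA] mat_neg1 mm_simps)
  qed
  have H2: "\<epsilon>' *\<^sub>R (mat lam ** PB) = gp e"
  proof -
    have "mat lam ** PB ** gp e = mat 1" using volp volB by (simp add: matrix_mul_assoc)
    then have "mat lam ** PB ** gp e ** gp e = mat 1 ** gp e" by simp
    then show ?thesis by (simp add: lassoc[OF eB] mm_simps)
  qed
  have lastok: "gm e ** X = -(X ** gp e)"
  proof -
    have "(\<epsilon>' *\<^sub>R (mat lam ** PA)) ** X = (- gm e) ** X" using H1 by simp
    then have "-(gm e ** X) = \<epsilon>' *\<^sub>R (mat lam ** (PA ** X))" by (simp add: mm_scaleR_r mm_neg_r matrix_mul_assoc)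
    also have "\<dots> = \<epsilon>' *\<^sub>R (mat lam ** X ** PB)" by (simp add: PX matrix_mul_assoc)
    also have "\<dots> = X ** (\<epsilon>' *\<^sub>R (mat lam ** PB))" by (simp add: mat_comm[of lam X] mm_scaleR_l matrix_mul_assoc)
    also have "\<dots> = X ** gp e" using H2 by simp
    finally show ?thesis by (metis minus_minus)
  qed
  have okall: "\<forall>i<d. gm (es!i) ** X = -(X ** gp (es!i))"
  proof (intro allI impI)
    fix i assume i: "i < d"
    show "gm (es!i) ** X = -(X ** gp (es!i))"
    proof (cases "i = d - 1")
      case True then show ?thesis using lastok eidx by simp
    next
      case False then show ?thesis using Xl i by (simp add: A_def B_def)
    qed
  qed
  have intw: "gm (-v) ** X = X ** gp v" for v
  proof -
    have "v \<in> span (set es)" using es_span[OF qs assms(3)] by simp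
    then show ?thesis
    proof (rule span_induct)
      show "subspace {v. gm (-v) ** X = X ** gp v}"
        unfolding subspace_def
      proof (intro conjI allI impI ballI)
        show "0 \<in> {v. gm (-v) ** X = X ** gp v}" using linear_0[OF linm] linear_0[OF linp] by simp
      next
        fix x y assume hx: "x \<in> {v. gm (-v) ** X = X ** gp v}" and hy: "y \<in> {v. gm (-v) ** X = X ** gp v}"
        have hx': "gm (-x) ** X = X ** gp x" using hx by (simp only: mem_Collect_eq)
        have hy': "gm (-y) ** X = X ** gp y" using hy by (simp only: mem_Collect_eq)
        have "gm (-(x+y)) ** X = X ** gp (x+y)"
          by (simp only: minus_add_distrib linear_add[OF linm] linear_add[OF linp] mm_add_r mm_add_l hx' hy')
        then show "x + y \<in> {v. gm (-v) ** X = X ** gp v}" by (simp only: mem_Collect_eq)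
      next
        fix c :: real and x assume "x \<in> {v. gm (-v) ** X = X ** gp v}"
        then show "c *\<^sub>R x \<in> {v. gm (-v) ** X = X ** gp v}"
          by (simp add: linear_scale[OF linm] linear_scale[OF linp] mm_scaleR_r mm_scaleR_l
              flip: scaleR_minus_right)
      qed
    next
      fix x assume "x \<in> set es"
      then obtain i where i: "i < d" "x = es ! i" by (metis in_set_conv_nth d_def)
      then show "gm (-x) ** X = X ** gp x" using okall linear_neg[OF linm] by (simp add: mm_neg_r)
    qed
  qed
  have inv: "\<exists>G. G ** X = mat 1"
  proof -
    let ?W = "{x. X *v x = 0}"
    have "invariant_csubspace gp ?W"
      unfolding invariant_csubspace_def
    proof (intro conjI ballI allI)
      show "0 \<in> ?W" by simp
    next
      fix x y assume "x \<in> ?W" "y \<in> ?W"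
      then show "x + y \<in> ?W" by (simp add: matrix_vector_right_distrib)
    next
      fix c x assume "x \<in> ?W"
      have "X *v (c *s x) = c *s (X *v x)"
        by (simp add: matrix_vector_mult_def vec_eq_iff sum_distrib_left mult.left_commute)
      then show "c *s x \<in> ?W" using \<open>x \<in> ?W\<close> by simp
    next
      fix v x assume "x \<in> ?W"
      then show "gp v *v x \<in> ?W"
        by (simp add: matrix_vector_mul_assoc flip: intw) (simp add: matrix_vector_mul_assoc[symmetric])
    qed
    then have "?W = {0} \<or> ?W = UNIV" using irp by (simp add: irreducible_rep_def)
    moreover have "?W \<noteq> UNIV"
    proof
      assume "?W = UNIV"
      then have "\<forall>x. X *v x = 0 *v x" by auto
      then have "X = 0" using matrix_eq by blast
      then show False using X0 by simp
    qed
    ultimately have "\<forall>x. X *v x = 0 \<longrightarrow> x = 0" by auto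
    then show ?thesis using matrix_left_invertible_ker by blast
  qed
  then obtain G where GX: "G ** X = mat 1" by blast
  have XG: "X ** G = mat 1" using GX matrix_left_right_inverse by blast
  have intw2: "gp (-v) ** G = G ** gm v" for v
  proof -
    have "G ** (gm (-v) ** X) ** G = G ** (X ** gp v) ** G" by (simp add: intw)
    then have "G ** gm (-v) = gp v ** G"
      by (simp add: matrix_mul_assoc GX) (simp add: matrix_mul_assoc[symmetric] XG)
    then show ?thesis using linear_neg[OF linm, of v] linear_neg[OF linp, of v]
      by (simp add: mm_neg_r mm_neg_l) (metis minus_minus)
  qed
  have iso: "isometry h h uminus"
    unfolding isometry_def using bilinear_lneg[OF bl] bilinear_rneg[OF bl] by (simp add: linear_uminus)
  have "clrep_mor h gp h gm uminus X"
    unfolding clrep_mor_def using qs crp crm wfp wfm iso intw by blast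
  moreover have "clrep_mor h gm h gp uminus G"
    unfolding clrep_mor_def using qs crp crm wfp wfm iso intw2 by blast
  ultimately have "clrep_iso h gp h gm"
    unfolding clrep_iso_def using GX XG by (intro exI[of _ uminus] exI[of _ X] exI[of _ G]) (auto simp: fun_eq_iff)
  then show ?thesis using wfp wfm by blast
qed

end
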